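(* Consider the faulty-starter delivery problem described in the context, with finisher starting position $(x,y)\neq(0,0)$, $y\ge 0$, and assume $(x,y)\in\overline{D}(1,1)$, i.e. $\sqrt{(x-1)^2+y^2}\le1$. Then the competitive ratio of $\mathcal{A}_d$ is $$\mathrm{CR}_{\mathcal{A}_d}=\begin{cases}\dfrac{x^2+y^2+x}{x\left(1+\sqrt{x^2+y^2}\right)} & \text{if }(x,y)\in\overline{D}(1/2,1/2),\\[2mm] 1+\dfrac{y^2}{x(\sqrt{x}+1)^2} & \text{otherwise.}\end{cases}$$
   Context: Setting. In the plane let $S=(0,0)$ and $T=(1,0)$. A "starter" drone carrying a package starts at $S$ at time $0$ and moves at unit speed along $\overline{ST}$ towards $T$. At an unknown time $t\in[0,1]$ it fails and stays forever at $(t,0)$ with the package (at time $s$ the package is at $(\min\{s,t\},0)$). A "finisher" drone starts at time $0$ at $P=(x,y)$ with $y\ge0$, moves at unit speed and can stop and turn instantaneously. The package can be handed over only when the drones are co-located; it is delivered at the first time the finisher, carrying the package, is at $T$. An online algorithm $\mathcal{A}$ specifies the finisher's trajectory using only $(x,y)$; $A(t)$ is its delivery time for fail time $t$. $\mathrm{Opt}(t)=\max\{1,\sqrt{(x-t)^2+y^2}+1-t\}$ is the optimal offline delivery time. $\mathrm{CR}_{\mathcal{A}}(t)=A(t)/\mathrm{Opt}(t)$ and $\mathrm{CR}_{\mathcal{A}}=\sup_{0\le t\le1}\mathrm{CR}_{\mathcal{A}}(t)$. $\overline{D}(c,r)$ denotes the closed disk of radius $r$ centered at $(c,0)$. Algorithm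 $\mathcal{A}_d$ (for $x>0$): let $d=(x^2+y^2)/(2x)$ (the point $(d,0)$ satisfies $\sqrt{(x-d)^2+y^2}=d$); the finisher goes straight to $(d,0)$, then moves along the segment towards $S$ until it finds the package, then goes to $T$. *)

theory Defs
  imports Complex_Main
begin

text \<open>Faulty-starter delivery problem. S = (0,0), T = (1,0). The starter fails at time t;
  at time s the package is at (min s t, 0).\<close>

definition starter_pos :: "real \<Rightarrow> real \<Rightarrow> real \<times> real" where
  "starter_pos t s = (min s t, 0)"

text \<open>The point (d,0) with distance d from P = (x,y).\<close>
definition Ad_d :: "real \<Rightarrow> real \<Rightarrow> real" where
  "Ad_d x y = (x\<^sup>2 + y\<^sup>2) / (2 * x)"

text \<open>Position at time s of the finisher following algorithm A_d, as long as it has not yet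
  picked up the package: it moves at unit speed along the straight segment from P to (d,0)
  (length d, reached at time d), then at unit speed along the x-axis towards S (stopping at S).\<close>
definition Ad_pos :: "real \<Rightarrow> real \<Rightarrow> real \<Rightarrow> real \<times> real" where
  "Ad_pos x y s = (let d = Ad_d x y in
     if s \<le> d then (x + (s / d) * (d - x), y - (s / d) * y)
     else (max (2 * d - s) 0, 0))"

definition Ad_pickup :: "real \<Rightarrow> real \<Rightarrow> real \<Rightarrow> real" where
  "Ad_pickup x y t = Inf {s. 0 \<le> s \<and> Ad_pos x y s = starter_pos t s}"

definition Ad_time :: "real \<Rightarrow> real \<Rightarrow> real \<Rightarrow> real" where
  "Ad_time x y t = (let p = Ad_pickup x y t; q = Ad_pos x y p in
     p + sqrt ((fst q - 1)\<^sup>2 + (snd q)\<^sup>2))"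

definition Opt :: "real \<Rightarrow> real \<Rightarrow> real \<Rightarrow> real" where
  "Opt x y t = max 1 (sqrt ((x - t)\<^sup>2 + y\<^sup>2) + 1 - t)"

definition CR_Ad :: "real \<Rightarrow> real \<Rightarrow> real" where
  "CR_Ad x y = (SUP t\<in>{0..1}. Ad_time x y t / Opt x y t)"

end

theory Submission
  imports Defs
begin
lemma pos_le:
  assumes "x > 0" "s \<le> Ad_d x y"
  shows "Ad_pos x y s = (x + (s / Ad_d x y) * (Ad_d x y - x), y - (s / Ad_d x y) * y)"
  using assms by (simp add: Ad_pos_def Let_def)

lemma pos_gt:
  assumes "s > Ad_d x y"
  shows "Ad_pos x y s = (max (2 * Ad_d x y - s) 0, 0)"
  using assms by (simp add: Ad_pos_def Let_def)

lemma no_meet_before: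
  assumes x: "x > 0" and s: "0 \<le> s" "s \<le> Ad_d x y"
    and eq: "Ad_pos x y s = starter_pos t s"
  shows "s = Ad_d x y \<and> Ad_d x y \<le> t"
proof -
  define d where "d = Ad_d x y"
  have dpos: "d > 0" using x unfolding d_def Ad_d_def
    by (simp add: add_pos_nonneg)
  have dd: "2 * d * x = x\<^sup>2 + y\<^sup>2" using x unfolding d_def Ad_d_def by simp
  from eq have e1: "x + (s / d) * (d - x) = min s t" and e2: "y - (s / d) * y = 0"
    using pos_le[OF x s(2)] unfolding d_def starter_pos_def by auto
  have "y * (d - s) = 0" using e2 dpos by (simp add: field_simps)
  then have "y = 0 \<or> s = d" by auto
  then show ?thesis
  proof
    assume y0: "y = 0"
    then have "d = x / 2" using dd x by (simp add: power2_eq_square field_simps)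
    then have "x + (s / d) * (d - x) = x - s" using x by (simp add: field_simps)
    with e1 have "x - s = min s t" by simp
    then show ?thesis using s \<open>d = x/2\<close> unfolding d_def[symmetric] by (auto simp: min_def split: if_splits)
  next
    assume "s = d"
    then have "x + (s / d) * (d - x) = d" using dpos by simp
    with e1 \<open>s = d\<close> show ?thesis unfolding d_def[symmetric] by (auto simp: min_def split: if_splits)
  qed
qed

lemma pickup:
  assumes x: "x > 0" and t: "0 \<le> t"
  shows "Ad_pickup x y t = (if Ad_d x y \<le> t then Ad_d x y else 2 * Ad_d x y - t)"
proof -
  define d where "d = Ad_d x y"
  have dpos: "d > 0" using x unfolding d_def Ad_d_def
    by (simp add: add_pos_nonneg)
  have dd: "2 * d * x = x\<^sup>2 + y\<^sup>2" using x unfolding d_def Ad_d_def by simp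
  show ?thesis
  proof (cases "d \<le> t")
    case True
    have "Ad_pos x y d = (d, 0)" using pos_le[OF x, of d y] dpos unfolding d_def[symmetric] by simp
    then have mem: "d \<in> {s. 0 \<le> s \<and> Ad_pos x y s = starter_pos t s}"
      using True dpos by (simp add: starter_pos_def)
    have "d \<le> s" if "s \<in> {s. 0 \<le> s \<and> Ad_pos x y s = starter_pos t s}" for s
    proof (rule ccontr)
      assume "\<not> d \<le> s"
      then show False using no_meet_before[OF x, of s y t] that unfolding d_def by auto
    qed
    then show ?thesis using True mem unfolding Ad_pickup_def d_def[symmetric]
      by (intro cInf_eq_minimum) auto
  next
    case False
    have "Ad_pos x y (2 * d - t) = (t, 0)" using pos_gt[of x y "2*d - t"] False t
      unfolding d_def[symmetric] by simp
    then have mem: "2 * d - t \<in> {s. 0 \<le> s \<and> Ad_pos x y s = starter_pos t s}"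
      using False dpos t by (simp add: starter_pos_def)
    have "2 * d - t \<le> s" if "s \<in> {s. 0 \<le> s \<and> Ad_pos x y s = starter_pos t s}" for s
    proof (rule ccontr)
      assume ns: "\<not> 2 * d - t \<le> s"
      show False
      proof (cases "s \<le> d")
        case True
        then show False using no_meet_before[OF x, of s y t] that False unfolding d_def by auto
      next
        case False2: False
        then have "Ad_pos x y s = (2 * d - s, 0)" using pos_gt[of x y s] ns t
          unfolding d_def[symmetric] by simp
        moreover have "starter_pos t s = (t, 0)" using False False2 by (simp add: starter_pos_def)
        ultimately show False using that ns by simp
      qed
    qed
    then show ?thesis using False mem unfolding Ad_pickup_def d_def[symmetric]
      by (intro cInf_eq_minimum) auto
  qed
qed

lemma time:
  assumes x: "x > 0" and t: "0 \<le> t" "t \<le> 1" and d1: "Ad_d x y \<le> 1"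
  shows "Ad_time x y t = (if Ad_d x y \<le> t then 1 else 2 * Ad_d x y + 1 - 2 * t)"
proof -
  define d where "d = Ad_d x y"
  have dpos: "d > 0" using x unfolding d_def Ad_d_def
    by (simp add: add_pos_nonneg)
  show ?thesis
  proof (cases "d \<le> t")
    case True
    have "Ad_pos x y d = (d, 0)" using pos_le[OF x, of d y] dpos unfolding d_def[symmetric] by simp
    then show ?thesis using True pickup[OF x t(1), of y] d1
      unfolding Ad_time_def d_def[symmetric] by (simp add: Let_def)
  next
    case False
    have "Ad_pos x y (2 * d - t) = (t, 0)" using pos_gt[of x y "2*d - t"] False t
      unfolding d_def[symmetric] by simp
    then show ?thesis using False pickup[OF x t(1), of y] t
      unfolding Ad_time_def d_def[symmetric] by (simp add: Let_def)
  qed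
qed


lemma case2_ident:
  fixes s y w :: real
  assumes s: "s > 0" and w: "w = y / (s * (1 + s))"
  shows "(1 - w\<^sup>2) * s\<^sup>2 + 2 * w * y + w\<^sup>2 = ((s\<^sup>2)\<^sup>2 + y\<^sup>2) / s\<^sup>2"
proof -
  have k: "s * (1 + s) > 0" using s by (intro mult_pos_pos) auto
  have yk: "y = w * (s * (1 + s))" using k unfolding w by (simp add: field_simps)
  show ?thesis using s unfolding yk by (simp add: field_simps power2_eq_square)
qed

lemma tstar_ident:
  fixes s y w :: real
  assumes s: "s > 0" and y: "y > 0" and w: "w = y / (s * (1 + s))"
  shows "s\<^sup>2 - ((s\<^sup>2)\<^sup>2 + y\<^sup>2 - s\<^sup>2) / (2 * s * (1 + s)) = y * (1 - w\<^sup>2) / (2 * w)"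
proof -
  have k: "s * (1 + s) > 0" using s by (intro mult_pos_pos) auto
  have yk: "y = w * (s * (1 + s))" using k unfolding w by (simp add: field_simps)
  have wp: "w > 0" using k y unfolding w by simp
  have k2: "s * 2 + s * (s * 2) \<noteq> 0" using s by (smt (verit) mult_pos_pos)
  show ?thesis using s wp k2 unfolding yk by (simp add: field_simps power2_eq_square)
qed

lemma cs2:
  fixes a b c e :: real
  shows "(a * c + b * e)\<^sup>2 \<le> (a\<^sup>2 + b\<^sup>2) * (c\<^sup>2 + e\<^sup>2)"
proof -
  have "(a\<^sup>2 + b\<^sup>2) * (c\<^sup>2 + e\<^sup>2) - (a * c + b * e)\<^sup>2 = (a * e - b * c)\<^sup>2"
    by (simp add: algebra_simps power2_eq_square)
  then show ?thesis by (smt (verit) zero_le_power2)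
qed

lemma cs_sqrt:
  fixes a b c e :: real
  shows "a * c + b * e \<le> sqrt (a\<^sup>2 + b\<^sup>2) * sqrt (c\<^sup>2 + e\<^sup>2)"
proof -
  have "(a * c + b * e)\<^sup>2 \<le> (sqrt (a\<^sup>2 + b\<^sup>2) * sqrt (c\<^sup>2 + e\<^sup>2))\<^sup>2"
    using cs2[where a=a and b=b and c=c and e=e] by (simp add: power_mult_distrib)
  then show ?thesis by (rule power2_le_imp_le) simp
qed


theorem theorem3:
  fixes x y :: real
  assumes "(x, y) \<noteq> (0, 0)" and "y \<ge> 0"
    and "sqrt ((x - 1)\<^sup>2 + y\<^sup>2) \<le> 1"
  shows "CR_Ad x y =
    (if sqrt ((x - 1/2)\<^sup>2 + y\<^sup>2) \<le> 1/2
     then (x\<^sup>2 + y\<^sup>2 + x) / (x * (1 + sqrt (x\<^sup>2 + y\<^sup>2)))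
     else 1 + y\<^sup>2 / (x * (sqrt x + 1)\<^sup>2))"
proof -
  define d where "d = Ad_d x y"
  define r where "r = sqrt (x\<^sup>2 + y\<^sup>2)"
  define g where "g = (\<lambda>t. sqrt ((x - t)\<^sup>2 + y\<^sup>2))"
  define R where "R = (\<lambda>t. Ad_time x y t / Opt x y t)"
  have h1: "(x - 1)\<^sup>2 + y\<^sup>2 \<le> 1" using assms(3) by simp
  have xy: "x\<^sup>2 + y\<^sup>2 \<le> 2 * x" using h1 by (simp add: power2_eq_square algebra_simps)
  have xpos: "x > 0"
  proof (rule ccontr)
    assume "\<not> x > 0"
    then have "x\<^sup>2 + y\<^sup>2 \<le> 0" using xy by linarith
    then have "x = 0 \<and> y = 0" by (smt (verit) zero_le_power2 power2_eq_iff_nonneg zero_eq_power2)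
    then show False using assms(1) by simp
  qed
  have r2: "r\<^sup>2 = x\<^sup>2 + y\<^sup>2" unfolding r_def by simp
  have rpos: "r > 0" unfolding r_def using xpos by (simp add: add_pos_nonneg)
  have rx: "x \<le> r" unfolding r_def by (rule real_le_rsqrt) simp
  have dd: "2 * d * x = x\<^sup>2 + y\<^sup>2" using xpos unfolding d_def Ad_d_def by simp
  have dpos: "d > 0" using xpos rpos r2 dd
    by (smt (verit) mult_pos_pos zero_less_power2 mult_nonpos_nonneg)
  have d1: "d \<le> 1"
  proof -
    have "d * x \<le> 1 * x" using dd xy by linarith
    then show ?thesis using xpos by (simp add: mult_le_cancel_right)
  qed
  have cond: "sqrt ((x - 1/2)\<^sup>2 + y\<^sup>2) \<le> 1/2 \<longleftrightarrow> x\<^sup>2 + y\<^sup>2 \<le> x"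
  proof -
    have "(1/2::real) = sqrt (1/4)" by (simp add: real_sqrt_divide)
    then have "sqrt ((x - 1/2)\<^sup>2 + y\<^sup>2) \<le> 1/2 \<longleftrightarrow> (x - 1/2)\<^sup>2 + y\<^sup>2 \<le> 1/4"
      by (metis real_sqrt_le_iff)
    also have "\<dots> \<longleftrightarrow> x\<^sup>2 + y\<^sup>2 \<le> x" by (simp add: power2_eq_square algebra_simps) linarith
    finally show ?thesis .
  qed
  have CR: "CR_Ad x y = Sup (R ` {0..1})" unfolding CR_Ad_def R_def by simp
  have Opt1: "Opt x y t \<ge> 1" for t unfolding Opt_def by simp
  have Rge: "R t \<le> 1" if "t \<in> {0..1}" "d \<le> t" for t
  proof -
    have "Ad_time x y t = 1" using time[OF xpos, of t y] that d1 unfolding d_def by auto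
    then show ?thesis unfolding R_def using Opt1[of t] by simp
  qed
  have Rd: "R d = 1"
  proof -
    have "Ad_time x y d = 1" using time[OF xpos, of d y] dpos d1 unfolding d_def by auto
    moreover have "(x - d)\<^sup>2 + y\<^sup>2 = d\<^sup>2" using dd by (simp add: power2_eq_square algebra_simps)
    then have "Opt x y d = 1" unfolding Opt_def using dpos by simp
    ultimately show ?thesis unfolding R_def by simp
  qed
  have Rlt: "R t = (2 * d + 1 - 2 * t) / (g t + 1 - t) \<and> t \<le> g t" if "0 \<le> t" "t < d" for t
  proof -
    have tg: "t \<le> g t" unfolding g_def
    proof (rule real_le_rsqrt)
      have "2 * x * t \<le> 2 * x * d" using that xpos by simp
      then show "t\<^sup>2 \<le> (x - t)\<^sup>2 + y\<^sup>2" using dd by (simp add: power2_eq_square algebra_simps)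
    qed
    have "Ad_time x y t = 2 * d + 1 - 2 * t" using time[OF xpos, of t y] that d1 unfolding d_def by auto
    moreover have "Opt x y t = g t + 1 - t" unfolding Opt_def g_def using tg unfolding g_def by simp
    ultimately show ?thesis unfolding R_def using tg by simp
  qed
  define V where "V = (if sqrt ((x - 1/2)\<^sup>2 + y\<^sup>2) \<le> 1/2
     then (x\<^sup>2 + y\<^sup>2 + x) / (x * (1 + sqrt (x\<^sup>2 + y\<^sup>2)))
     else 1 + y\<^sup>2 / (x * (sqrt x + 1)\<^sup>2))"
  have main: "V \<ge> 1 \<and> (\<forall>t. 0 \<le> t \<and> t < d \<longrightarrow> 2 * d + 1 - 2 * t \<le> V * (g t + 1 - t))
      \<and> (\<exists>t\<in>{0..1}. R t = V)"
  proof (cases "x\<^sup>2 + y\<^sup>2 \<le> x")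
    case True
    have V: "V = (x\<^sup>2 + y\<^sup>2 + x) / (x * (1 + r))" unfolding V_def r_def using True cond by simp
    have Vr: "V * (1 + r) = 2 * d + 1"
    proof -
      have "V * (1 + r) = (x\<^sup>2 + y\<^sup>2 + x) / x" unfolding V using rpos xpos by simp
      also have "\<dots> = 2 * d + 1" using dd xpos by (simp add: field_simps)
      finally show ?thesis .
    qed
    have V1: "V \<ge> 1"
    proof -
      have "r * x \<le> r * r" using rx rpos by (simp add: mult_left_mono)
      then have "x * (1 + r) \<le> x\<^sup>2 + y\<^sup>2 + x" using r2
        by (simp add: algebra_simps power2_eq_square)
      then show ?thesis unfolding V using xpos rpos by simp
    qed
    have Vxr: "V * (x + r) \<le> 2 * r"
    proof -
      have "(r - x) * (r\<^sup>2 - x) \<le> 0" using rx True r2 by (simp add: mult_nonneg_nonpos)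
      then have "(r\<^sup>2 + x) * (x + r) \<le> 2 * r * (x * (1 + r))"
        by (simp add: algebra_simps power2_eq_square)
      then have "(x\<^sup>2 + y\<^sup>2 + x) * (x + r) \<le> 2 * r * (x * (1 + r))"
        using r2 by simp
      moreover have "x * (1 + r) > 0" using xpos rpos by simp
      ultimately have "((x\<^sup>2 + y\<^sup>2 + x) * (x + r)) / (x * (1 + r)) \<le> 2 * r"
        by (simp add: pos_divide_le_eq)
      then show ?thesis unfolding V by simp
    qed
    have bound: "2 * d + 1 - 2 * t \<le> V * (g t + 1 - t)" if t: "0 \<le> t" "t < d" for t
    proof -
      have cs: "x * (x - t) + y * y \<le> r * g t"
        using cs_sqrt[where a=x and b=y and c="x-t" and e=y] unfolding r_def g_def by simp
      have cs': "r\<^sup>2 - x * t \<le> r * g t" using cs r2 by (simp add: algebra_simps power2_eq_square)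
      have "V * (r\<^sup>2 - x * t) \<le> V * (r * g t)" using cs' V1 by (intro mult_left_mono) auto
      moreover have "t * (V * (x + r)) \<le> t * (2 * r)" using Vxr t by (intro mult_left_mono) auto
      ultimately have "r * (2 * d + 1 - 2 * t) \<le> r * (V * (g t + 1 - t))"
      proof -
        have A: "r * (V * (g t + 1 - t)) = V * (r * g t) + V * r - t * (V * r)" by (simp add: algebra_simps)
        have B: "V * (r\<^sup>2 - x * t) = V * r\<^sup>2 - t * (V * x)" by (simp add: algebra_simps)
        have C: "V * r\<^sup>2 + V * r = r * (V * (1 + r))" by (simp add: algebra_simps power2_eq_square)
        have D: "t * (V * (x + r)) = t * (V * x) + t * (V * r)" by (simp add: algebra_simps)
        have E: "r * (2 * d + 1 - 2 * t) = r * (2 * d + 1) - t * (2 * r)" by (simp add: algebra_simps)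
        have F: "r * (V * (1 + r)) = r * (2 * d + 1)" using Vr by simp
        show ?thesis using A B C D E F \<open>V * (r\<^sup>2 - x * t) \<le> V * (r * g t)\<close>
          \<open>t * (V * (x + r)) \<le> t * (2 * r)\<close> by linarith
      qed
      then show ?thesis using rpos by simp
    qed
    have att: "R 0 = V"
    proof -
      have "R 0 = (2 * d + 1) / (r + 1)" using Rlt[of 0] dpos unfolding g_def r_def by simp
      moreover have "V = (2 * d + 1) / (1 + r)" using Vr rpos by (simp add: eq_divide_eq)
      ultimately show ?thesis by (simp add: add.commute)
    qed
    show ?thesis using V1 bound att by force
  next
    case False
    define s where "s = sqrt x"
    have spos: "s > 0" unfolding s_def using xpos by simp
    have xs: "x = s\<^sup>2" unfolding s_def using xpos by simp
    define w where "w = y / (s * (1 + s))"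
    have V: "V = 1 + w\<^sup>2" unfolding V_def w_def s_def using False cond
      using xpos by (simp add: power_divide power_mult_distrib add.commute)
    have wnn: "w \<ge> 0" unfolding w_def using spos assms(2) by simp
    have ident: "(1 - w\<^sup>2) * x + 2 * w * y + w\<^sup>2 = 2 * d"
    proof -
      have "(1 - w\<^sup>2) * x + 2 * w * y + w\<^sup>2 = ((s\<^sup>2)\<^sup>2 + y\<^sup>2) / s\<^sup>2"
        using case2_ident[OF spos w_def] xs by simp
      also have "\<dots> = 2 * d" using dd xs spos by (simp add: field_simps)
      finally show ?thesis .
    qed
    have sq: "sqrt ((1 - w\<^sup>2)\<^sup>2 + (2 * w)\<^sup>2) = 1 + w\<^sup>2"
    proof -
      have "(1 - w\<^sup>2)\<^sup>2 + (2 * w)\<^sup>2 = (1 + w\<^sup>2)\<^sup>2" by (simp add: power2_eq_square algebra_simps)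
      then show ?thesis by simp
    qed
    have V1: "V \<ge> 1" unfolding V by simp
    have bound: "2 * d + 1 - 2 * t \<le> V * (g t + 1 - t)" if t: "0 \<le> t" "t < d" for t
    proof -
      have cs: "(1 - w\<^sup>2) * (x - t) + 2 * w * y \<le> (1 + w\<^sup>2) * g t"
        using cs_sqrt[where a="1 - w\<^sup>2" and b="2 * w" and c="x-t" and e=y] sq unfolding g_def by simp
      have e: "(1 - w\<^sup>2) * (x - t) + 2 * w * y + (1 + w\<^sup>2) * (1 - t)
          = ((1 - w\<^sup>2) * x + 2 * w * y + w\<^sup>2) + 1 - 2 * t"
        by (simp add: algebra_simps)
      have "V * (g t + 1 - t) = (1 + w\<^sup>2) * g t + (1 + w\<^sup>2) * (1 - t)" unfolding V
        by (simp add: algebra_simps)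
      then show ?thesis using cs e ident by linarith
    qed
    have att: "\<exists>t\<in>{0..1}. R t = V"
    proof (cases "y = 0")
      case True
      then have "V = 1" unfolding V w_def by simp
      then show ?thesis using Rd dpos d1 by force
    next
      case False
      then have ypos: "y > 0" using assms(2) by simp
      have wpos: "w > 0" unfolding w_def using spos ypos by simp
      define N where "N = x\<^sup>2 + y\<^sup>2"
      define ts where "ts = (N - x) / (2 * s * (1 + s))"
      have den: "2 * s * (1 + s) > 0" using spos by (intro mult_pos_pos) auto
      have Nx: "N > x" unfolding N_def using \<open>\<not> x\<^sup>2 + y\<^sup>2 \<le> x\<close> by simp
      have tspos: "ts > 0" unfolding ts_def using Nx den by simp
      have tsd: "ts < d"
      proof -
        have "ts < N / (2 * s * (1 + s))" unfolding ts_def using den xpos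
          by (intro divide_strict_right_mono) auto
        also have "\<dots> \<le> N / (2 * x)"
        proof (rule divide_left_mono)
          show "2 * x \<le> 2 * s * (1 + s)" using xs spos by (simp add: power2_eq_square algebra_simps)
          show "0 \<le> N" unfolding N_def by simp
          show "0 < 2 * s * (1 + s) * (2 * x)" using den xpos spos by (intro mult_pos_pos) auto
        qed
        also have "\<dots> = d" unfolding N_def using dd xpos by (simp add: field_simps)
        finally show ?thesis .
      qed
      have xts: "x - ts = y * (1 - w\<^sup>2) / (2 * w)"
        using tstar_ident[OF spos ypos w_def] xs unfolding ts_def N_def by simp
      have gts: "g ts = y * (1 + w\<^sup>2) / (2 * w)"
      proof -
        have "(x - ts)\<^sup>2 + y\<^sup>2 = (y * (1 + w\<^sup>2) / (2 * w))\<^sup>2" unfolding xts using wpos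
          by (simp add: field_simps power2_eq_square)
        then show ?thesis unfolding g_def using wpos ypos by simp
      qed
      have eqcs: "(1 + w\<^sup>2) * g ts = (1 - w\<^sup>2) * (x - ts) + 2 * w * y"
        unfolding gts xts using wpos by (simp add: field_simps power2_eq_square)
      have e: "(1 - w\<^sup>2) * (x - ts) + 2 * w * y + (1 + w\<^sup>2) * (1 - ts)
          = ((1 - w\<^sup>2) * x + 2 * w * y + w\<^sup>2) + 1 - 2 * ts"
        by (simp add: algebra_simps)
      have VD: "V * (g ts + 1 - ts) = 2 * d + 1 - 2 * ts" unfolding V
        using eqcs e ident by (simp add: algebra_simps)
      have "R ts = (2 * d + 1 - 2 * ts) / (g ts + 1 - ts)" and tg: "ts \<le> g ts"
        using Rlt[of ts] tspos tsd by auto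
      then have "R ts = V * (g ts + 1 - ts) / (g ts + 1 - ts)" using VD by simp
      moreover have "g ts + 1 - ts \<noteq> 0" using tg by linarith
      ultimately have "R ts = V" by simp
      then show ?thesis using tspos tsd d1 by force
    qed
    show ?thesis using V1 bound att by blast
  qed
  have ub: "R t \<le> V" if "t \<in> {0..1}" for t
  proof (cases "d \<le> t")
    case True
    then show ?thesis using Rge[OF that] main by linarith
  next
    case False
    then have t: "0 \<le> t" "t < d" using that by auto
    have "g t + 1 - t > 0" using Rlt[OF t] by linarith
    then show ?thesis using Rlt[OF t] main t by (simp add: pos_divide_le_eq mult.commute)
  qed
  have "Sup (R ` {0..1}) = V"
    using main ub by (intro cSup_eq_maximum) auto
  then show ?thesis using CR unfolding V_def by simp
qed

end
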